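(* For any non-negative integer $n$ there exists a function $\varphi\in\mathcal{S}(\mathbf{R})$, $\varphi\not\equiv 0$, satisfying the system of non-linear equations $$\int_{-\infty}^{+\infty} x^k \varphi(x)\,dx=\frac{\int_{-\infty}^{+\infty} x^k \varphi^2(x)\,dx}{\int_{-\infty}^{+\infty} \varphi^2(x)\,dx},\qquad k=0,1,2,\ldots,n.$$
   Context: $\mathcal{S}(\mathbf{R})$ denotes the Schwartz space of rapidly decreasing smooth real-valued functions on $\mathbf{R}$. *)

theory Defs
  imports "HOL-Analysis.Analysis"
begin

definition schwartz :: "(real \<Rightarrow> real) set" where
  "schwartz = {f. (\<forall>m. \<forall>x. (deriv ^^ m) f differentiable (at x)) \<and>
     (\<forall>j m. \<exists>C. \<forall>x. \<bar>x ^ j * (deriv ^^ m) f x\<bar> \<le> C)}"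

end

theory Submission
  imports Defs "HOL-Probability.Sinc_Integral" "HOL-Computational_Algebra.Polynomial"
begin


definition gp :: "real poly \<Rightarrow> real \<Rightarrow> real" where
  "gp p x = poly p x * exp (- (x^2))"

definition Dp :: "real poly \<Rightarrow> real poly" where
  "Dp p = pderiv p - smult 2 (pCons 0 p)"

lemma gp_fun: "gp p = (\<lambda>x. poly p x * exp (- (x^2)))"
  by (rule ext) (simp add: gp_def)

lemma gp_deriv: "(gp p has_real_derivative gp (Dp p) x) (at x)"
proof -
  have h2: "((\<lambda>x. exp (- (x^2))) has_real_derivative exp (- (x^2)) * (- (2 * x))) (at x)"
    by (auto intro!: derivative_eq_intros)
  show ?thesis
    apply (subst gp_fun[of p])
    apply (rule DERIV_cong[OF DERIV_mult[OF poly_DERIV h2]])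
    apply (simp add: gp_def Dp_def algebra_simps)
    done
qed

lemma gp_cont: "continuous_on UNIV (gp p)"
  unfolding gp_fun by (intro continuous_intros)

lemma exp_ge_pow: "(x::real) \<ge> 0 \<Longrightarrow> x ^ n / fact n \<le> exp x"
proof -
  assume "x \<ge> 0"
  have "x ^ n / fact n \<le> (\<Sum>k\<le>n. x ^ k / fact k)"
    using \<open>x \<ge> 0\<close> by (intro member_le_sum) auto
  also have "\<dots> \<le> exp x"
    using \<open>0 \<le> x\<close> summable_exp_generic[of x]
    by (auto simp: exp_def divide_inverse ac_simps intro!: sum_le_suminf)
  finally show ?thesis .
qed

lemma mono_bound: "\<bar>x ^ i\<bar> * exp (- (x^2)) \<le> 1 + fact i" for x :: real
proof -
  have "\<bar>x\<bar> ^ i \<le> 1 + (x^2)^i"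
  proof (cases "\<bar>x\<bar> \<le> 1")
    case True
    have "\<bar>x\<bar>^i \<le> 1" using True by (intro power_le_one) auto
    moreover have "0 \<le> (x^2)^i" by simp
    ultimately show ?thesis by linarith
  next
    case False
    have "\<bar>x\<bar> * 1 \<le> \<bar>x\<bar> * \<bar>x\<bar>" using False by (intro mult_left_mono) auto
    then have "\<bar>x\<bar> ^ i \<le> (\<bar>x\<bar>^2) ^ i"
      by (intro power_mono) (auto simp: power2_eq_square)
    then show ?thesis by simp
  qed
  moreover have "(x^2)^i \<le> fact i * exp (x^2)"
    using exp_ge_pow[of "x^2" i] by (simp add: field_simps)
  ultimately have "\<bar>x\<bar> ^ i \<le> 1 + fact i * exp (x^2)" by linarith
  then have "\<bar>x\<bar> ^ i * exp (- (x^2)) \<le> (1 + fact i * exp (x^2)) * exp (- (x^2))"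
    by (intro mult_right_mono) auto
  also have "\<dots> = exp (- (x^2)) + fact i"
    by (simp add: algebra_simps exp_minus)
  also have "\<dots> \<le> 1 + fact i" by simp
  finally show ?thesis by (simp add: abs_mult power_abs)
qed

lemma gp_bounded: "\<exists>C. \<forall>x. \<bar>gp p x\<bar> \<le> C"
proof -
  define C where "C = (\<Sum>i\<le>degree p. \<bar>coeff p i\<bar> * (1 + fact i))"
  have "\<bar>gp p x\<bar> \<le> C" for x
  proof -
    have "gp p x = (\<Sum>i\<le>degree p. coeff p i * (x ^ i * exp (- (x^2))))"
      unfolding gp_def poly_altdef by (simp add: sum_distrib_right mult.assoc)
    also have "\<bar>\<dots>\<bar> \<le> (\<Sum>i\<le>degree p. \<bar>coeff p i * (x ^ i * exp (- (x^2)))\<bar>)"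
      by (rule sum_abs)
    also have "\<dots> \<le> C" unfolding C_def
      by (intro sum_mono) (auto simp: abs_mult intro!: mult_left_mono mono_bound)
    finally show ?thesis .
  qed
  then show ?thesis by blast
qed

definition Dec :: "(real \<Rightarrow> real) \<Rightarrow> bool" where
  "Dec f \<longleftrightarrow> (\<forall>j. \<exists>C. \<forall>x. \<bar>x ^ j * f x\<bar> \<le> C)"

lemma gp_mult_pow: "x ^ j * gp p x = gp (monom 1 j * p) x"
  by (simp add: gp_def poly_monom)

lemma Dec_gp: "Dec (gp p)"
  unfolding Dec_def gp_mult_pow using gp_bounded by blast

lemma Dec_add: "Dec f \<Longrightarrow> Dec g \<Longrightarrow> Dec (\<lambda>x. f x + g x)"
  unfolding Dec_def
proof (intro allI)
  fix j assume "\<forall>j. \<exists>C. \<forall>x. \<bar>x ^ j * f x\<bar> \<le> C" "\<forall>j. \<exists>C. \<forall>x. \<bar>x ^ j * g x\<bar> \<le> C"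
  then obtain C1 C2 where "\<forall>x. \<bar>x ^ j * f x\<bar> \<le> C1" "\<forall>x. \<bar>x ^ j * g x\<bar> \<le> C2" by blast
  moreover have "\<bar>x ^ j * (f x + g x)\<bar> \<le> \<bar>x ^ j * f x\<bar> + \<bar>x ^ j * g x\<bar>" for x
    by (simp add: distrib_left abs_triangle_ineq)
  ultimately have "\<forall>x. \<bar>x ^ j * (f x + g x)\<bar> \<le> C1 + C2"
    by (meson add_mono order_trans)
  then show "\<exists>C. \<forall>x. \<bar>x ^ j * (f x + g x)\<bar> \<le> C" by blast
qed

lemma Dec_mult_bounded: "Dec f \<Longrightarrow> \<forall>x. \<bar>g x\<bar> \<le> B \<Longrightarrow> Dec (\<lambda>x. f x * g x)"
  unfolding Dec_def
proof (intro allI)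
  fix j assume "\<forall>j. \<exists>C. \<forall>x. \<bar>x ^ j * f x\<bar> \<le> C" and g: "\<forall>x. \<bar>g x\<bar> \<le> B"
  then obtain C1 where C1: "\<forall>x. \<bar>x ^ j * f x\<bar> \<le> C1" by blast
  have "\<bar>x ^ j * (f x * g x)\<bar> \<le> C1 * B" for x
  proof -
    have "\<bar>x ^ j * (f x * g x)\<bar> = \<bar>x ^ j * f x\<bar> * \<bar>g x\<bar>" by (simp add: abs_mult)
    also have "\<dots> \<le> C1 * B" using C1 g by (intro mult_mono) auto
    finally show ?thesis .
  qed
  then show "\<exists>C. \<forall>x. \<bar>x ^ j * (f x * g x)\<bar> \<le> C" by blast
qed

lemma Dec_pow: "Dec f \<Longrightarrow> Dec (\<lambda>x. x ^ k * f x)"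
  unfolding Dec_def
proof (intro allI)
  fix j assume "\<forall>j. \<exists>C. \<forall>x. \<bar>x ^ j * f x\<bar> \<le> C"
  then obtain C where "\<forall>x. \<bar>x ^ (j + k) * f x\<bar> \<le> C" by blast
  moreover have "x ^ j * (x ^ k * f x) = x ^ (j + k) * f x" for x
    by (simp add: power_add mult.assoc)
  ultimately show "\<exists>C. \<forall>x. \<bar>x ^ j * (x ^ k * f x)\<bar> \<le> C"
    by metis
qed

lemma Dec_cmult: "Dec f \<Longrightarrow> Dec (\<lambda>x. c * f x)"
  using Dec_mult_bounded[of f "\<lambda>_. c" "\<bar>c\<bar>"] by (simp add: mult.commute)

lemma Dec_integrable:
  assumes "Dec f" "continuous_on UNIV f"
  shows "integrable lborel f"
proof -
  obtain C0 C2 where C0: "\<forall>x. \<bar>x ^ 0 * f x\<bar> \<le> C0" and C2: "\<forall>x. \<bar>x ^ 2 * f x\<bar> \<le> C2"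
    using assms(1) unfolding Dec_def by blast
  have bd: "norm (f x) \<le> (C0 + C2) * inverse (1 + x^2)" for x
  proof -
    have "(1 + x^2) * \<bar>f x\<bar> \<le> C0 + C2"
      using C0[rule_format, of x] C2[rule_format, of x]
      by (simp add: abs_mult distrib_right)
    then show ?thesis
      by (simp add: field_simps add_pos_nonneg)
  qed
  have "integrable lborel (\<lambda>x::real. inverse (1 + x^2))"
    using integrable_inverse_1_plus_square by (simp add: set_integrable_def)
  then have "integrable lborel (\<lambda>x. (C0 + C2) * inverse (1 + x^2))" by simp
  moreover have "f \<in> borel_measurable lborel"
    using assms(2) by (simp add: borel_measurable_continuous_onI)
  ultimately show ?thesis
  proof (rule Bochner_Integration.integrable_bound)
    show "AE x in lborel. norm (f x) \<le> norm ((C0 + C2) * inverse (1 + x^2))"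
    proof (intro AE_I2)
      fix x show "norm (f x) \<le> norm ((C0 + C2) * inverse (1 + x^2))"
        by (rule order_trans[OF bd[of x]]) simp
    qed
  qed
qed



lemma Dec_mirror: "Dec f \<Longrightarrow> Dec (\<lambda>x. f (- x))"
  unfolding Dec_def
proof (intro allI)
  fix j assume "\<forall>j. \<exists>C. \<forall>x. \<bar>x ^ j * f x\<bar> \<le> C"
  then obtain C where C: "\<forall>x. \<bar>x ^ j * f x\<bar> \<le> C" by blast
  have "\<bar>x ^ j * f (- x)\<bar> \<le> C" for x
    using C[rule_format, of "-x"] by (simp add: abs_mult power_abs)
  then show "\<exists>C. \<forall>x. \<bar>x ^ j * f (- x)\<bar> \<le> C" by blast
qed

lemma Dec_tendsto_top: "Dec f \<Longrightarrow> (f \<longlongrightarrow> 0) at_top"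
proof -
  assume "Dec f"
  then obtain C where C: "\<forall>x. \<bar>x ^ 1 * f x\<bar> \<le> C" unfolding Dec_def by blast
  have lim: "((\<lambda>x::real. C * inverse x) \<longlongrightarrow> 0) at_top"
    by (intro tendsto_mult_right_zero tendsto_inverse_0_at_top filterlim_ident)
  have ev: "eventually (\<lambda>x. norm (f x) \<le> C * inverse x) at_top"
  proof (rule eventually_at_top_linorderI[of 1])
    fix x :: real assume "1 \<le> x"
    then have "x * \<bar>f x\<bar> \<le> C" using C[rule_format, of x] by (simp add: abs_mult)
    then show "norm (f x) \<le> C * inverse x" using \<open>1 \<le> x\<close>
      by (simp add: field_simps)
  qed
  show ?thesis by (rule Lim_null_comparison[OF ev lim])
qed

lemma Dec_tendsto_bot: "Dec f \<Longrightarrow> (f \<longlongrightarrow> 0) at_bot"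
proof -
  assume "Dec f"
  then have "((\<lambda>x. f (- x)) \<longlongrightarrow> 0) at_top" by (intro Dec_tendsto_top Dec_mirror)
  then show ?thesis by (simp add: filterlim_at_bot_mirror)
qed

lemma Dec_FTC:
  assumes F: "\<And>x. (F has_real_derivative f x) (at x)"
    and "Dec F" "Dec f" and cf: "continuous_on UNIV f"
  shows "(\<integral>x. f x \<partial>lborel) = 0"
proof -
  have "(LBINT x=-\<infinity>..\<infinity>. f x) = 0 - 0"
  proof (rule interval_integral_FTC_integrable)
    show "- \<infinity> < (\<infinity>::ereal)" by simp
    show "(F has_vector_derivative f x) (at x)" for x
      using F[of x] by (simp add: has_real_derivative_iff_has_vector_derivative)
    show "isCont f x" for x
      using cf by (simp add: continuous_on_eq_continuous_at)
    show "set_integrable lborel (einterval (- \<infinity>) \<infinity>) f"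
      unfolding set_integrable_def using Dec_integrable[OF \<open>Dec f\<close> cf] by simp
    show "((F \<circ> real_of_ereal) \<longlongrightarrow> 0) (at_right (- \<infinity>))"
      unfolding ereal_tendsto_simps1 by (rule Dec_tendsto_bot[OF \<open>Dec F\<close>])
    show "((F \<circ> real_of_ereal) \<longlongrightarrow> 0) (at_left \<infinity>)"
      unfolding ereal_tendsto_simps1 by (rule Dec_tendsto_top[OF \<open>Dec F\<close>])
  qed
  then show ?thesis
    by (simp add: interval_lebesgue_integral_def set_lebesgue_integral_def)
qed



lemma gp_cont': "continuous_on S (\<lambda>x. gp p (g x))" if "continuous_on S g"
  using continuous_on_compose2[OF gp_cont that] by auto

lemma gp_ibp:
  "(\<integral>x. x ^ k * gp (Dp q) x \<partial>lborel) = - real k * (\<integral>x. x ^ (k - 1) * gp q x \<partial>lborel)"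
proof -
  define f where "f = (\<lambda>x. real k * (x ^ (k - 1) * gp q x) + x ^ k * gp (Dp q) x)"
  have der: "((\<lambda>x. x ^ k * gp q x) has_real_derivative f x) (at x)" for x
  proof -
    have "((\<lambda>x. x ^ k * gp q x) has_real_derivative
        real k * x ^ (k - 1) * gp q x + gp (Dp q) x * x ^ k) (at x)"
      by (rule DERIV_cong[OF DERIV_mult[OF DERIV_pow gp_deriv]]) simp
    then show ?thesis unfolding f_def by (simp add: algebra_simps)
  qed
  have c1: "continuous_on UNIV (\<lambda>x. x ^ (k - 1) * gp q x)"
    by (intro continuous_intros gp_cont')
  have c2: "continuous_on UNIV (\<lambda>x. x ^ k * gp (Dp q) x)"
    by (intro continuous_intros gp_cont')
  have cf: "continuous_on UNIV f" unfolding f_def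
    by (intro continuous_intros gp_cont')
  have d1: "Dec (\<lambda>x. x ^ (k - 1) * gp q x)" by (intro Dec_pow Dec_gp)
  have d2: "Dec (\<lambda>x. x ^ k * gp (Dp q) x)" by (intro Dec_pow Dec_gp)
  have "Dec f" unfolding f_def by (intro Dec_add Dec_cmult d1 d2)
  have "(\<integral>x. f x \<partial>lborel) = 0"
    by (rule Dec_FTC[OF der _ \<open>Dec f\<close> cf]) (intro Dec_pow Dec_gp)
  moreover have "(\<integral>x. f x \<partial>lborel) = real k * (\<integral>x. x ^ (k - 1) * gp q x \<partial>lborel)
      + (\<integral>x. x ^ k * gp (Dp q) x \<partial>lborel)"
    unfolding f_def
    using Dec_integrable[OF d1 c1] Dec_integrable[OF d2 c2] by simp
  ultimately show ?thesis by linarith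
qed

definition hp :: "nat \<Rightarrow> real poly" where
  "hp m = (Dp ^^ m) 1"

lemma hp_Suc: "hp (Suc m) = Dp (hp m)"
  by (simp add: hp_def)

lemma hp_ortho: "k < m \<Longrightarrow> (\<integral>x. x ^ k * gp (hp m) x \<partial>lborel) = 0"
proof (induction m arbitrary: k)
  case 0 then show ?case by simp
next
  case (Suc m)
  show ?case
  proof (cases k)
    case 0 then show ?thesis unfolding hp_Suc using gp_ibp[of 0 "hp m"] by simp
  next
    case (Suc k')
    then have "k - 1 < m" using Suc.prems by simp
    then show ?thesis unfolding hp_Suc gp_ibp using Suc.IH by simp
  qed
qed

lemma Dp_nonzero: "p \<noteq> 0 \<Longrightarrow> Dp p \<noteq> 0"
proof
  assume "p \<noteq> 0" "Dp p = 0"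
  then have "pderiv p = smult 2 (pCons 0 p)" unfolding Dp_def by simp
  then have "degree (pderiv p) = Suc (degree p)" using \<open>p \<noteq> 0\<close> by simp
  then show False by (simp add: degree_pderiv)
qed

lemma hp_nonzero: "hp m \<noteq> 0"
  by (induction m) (auto simp: hp_Suc Dp_nonzero, simp add: hp_def)



inductive EE :: "(real \<Rightarrow> real) \<Rightarrow> (real \<Rightarrow> real) \<Rightarrow> bool" for r where
  EE_const: "EE r (\<lambda>x. c)"
| EE_r: "EE r r"
| EE_gp: "EE r (gp p)"
| EE_add: "EE r f \<Longrightarrow> EE r g \<Longrightarrow> EE r (\<lambda>x. f x + g x)"
| EE_mult: "EE r f \<Longrightarrow> EE r g \<Longrightarrow> EE r (\<lambda>x. f x * g x)"

inductive JJ :: "(real \<Rightarrow> real) \<Rightarrow> (real \<Rightarrow> real) \<Rightarrow> bool" for r where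
  JJ_gp: "JJ r (gp p)"
| JJ_mult: "JJ r f \<Longrightarrow> EE r e \<Longrightarrow> JJ r (\<lambda>x. f x * e x)"
| JJ_add: "JJ r f \<Longrightarrow> JJ r g \<Longrightarrow> JJ r (\<lambda>x. f x + g x)"

lemma EE_deriv:
  assumes rd: "\<And>x. (r has_real_derivative (gp p1 x * (r x * r x * r x))) (at x)"
  shows "EE r f \<Longrightarrow> \<exists>f'. EE r f' \<and> (\<forall>x. (f has_real_derivative f' x) (at x))"
proof (induction rule: EE.induct)
  case (EE_const c)
  then show ?case by (intro exI[of _ "\<lambda>x. 0"]) (auto intro: EE.intros)
next
  case EE_r
  have "EE r (\<lambda>x. gp p1 x * (r x * r x * r x))" by (intro EE.intros)
  then show ?case using rd by blast
next
  case (EE_gp p)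
  then show ?case using gp_deriv by (intro exI[of _ "gp (Dp p)"]) (auto intro: EE.intros)
next
  case (EE_add f g)
  then obtain f' g' where "EE r f'" "\<forall>x. (f has_real_derivative f' x) (at x)"
    "EE r g'" "\<forall>x. (g has_real_derivative g' x) (at x)" by blast
  then show ?case
    by (intro exI[of _ "\<lambda>x. f' x + g' x"]) (auto intro: EE.intros DERIV_add)
next
  case (EE_mult f g)
  then obtain f' g' where "EE r f'" "\<forall>x. (f has_real_derivative f' x) (at x)"
    "EE r g'" "\<forall>x. (g has_real_derivative g' x) (at x)" by blast
  moreover have "EE r (\<lambda>x. f' x * g x + g' x * f x)"
    by (rule EE.EE_add[OF EE.EE_mult[OF \<open>EE r f'\<close> EE_mult.hyps(2)] EE.EE_mult[OF \<open>EE r g'\<close> EE_mult.hyps(1)]])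
  ultimately show ?case
    by (intro exI[of _ "\<lambda>x. f' x * g x + g' x * f x"]) (auto intro: DERIV_mult)
qed

lemma EE_bounded:
  assumes R: "\<forall>x. \<bar>r x\<bar> \<le> R"
  shows "EE r f \<Longrightarrow> \<exists>C. \<forall>x. \<bar>f x\<bar> \<le> C"
proof (induction rule: EE.induct)
  case (EE_const c) then show ?case by auto
next
  case EE_r then show ?case using R by auto
next
  case (EE_gp p) then show ?case using gp_bounded by auto
next
  case (EE_add f g)
  then obtain A B where "\<forall>x. \<bar>f x\<bar> \<le> A" "\<forall>x. \<bar>g x\<bar> \<le> B" by blast
  then have "\<forall>x. \<bar>f x + g x\<bar> \<le> A + B" by (meson abs_triangle_ineq add_mono order_trans)
  then show ?case by blast
next
  case (EE_mult f g)
  then obtain A B where A: "\<forall>x. \<bar>f x\<bar> \<le> A" and B: "\<forall>x. \<bar>g x\<bar> \<le> B" by blast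
  have "\<bar>f x * g x\<bar> \<le> A * B" for x
    unfolding abs_mult using A B by (intro mult_mono) auto
  then show ?case by blast
qed

lemma JJ_EE: "JJ r f \<Longrightarrow> EE r f"
  by (induction rule: JJ.induct) (auto intro: EE.intros)

lemma JJ_deriv:
  assumes rd: "\<And>x. (r has_real_derivative (gp p1 x * (r x * r x * r x))) (at x)"
  shows "JJ r f \<Longrightarrow> \<exists>f'. JJ r f' \<and> (\<forall>x. (f has_real_derivative f' x) (at x))"
proof (induction rule: JJ.induct)
  case (JJ_gp p)
  then show ?case using gp_deriv by (intro exI[of _ "gp (Dp p)"]) (auto intro: JJ.intros)
next
  case (JJ_mult f e)
  obtain f' where "JJ r f'" "\<forall>x. (f has_real_derivative f' x) (at x)" using JJ_mult by blast
  moreover obtain e' where "EE r e'" "\<forall>x. (e has_real_derivative e' x) (at x)"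
    using EE_deriv[OF rd JJ_mult(2)] by blast
  moreover have "JJ r (\<lambda>x. f' x * e x + e' x * f x)"
  proof -
    have "JJ r (\<lambda>x. f x * e' x)" using JJ_mult(1) \<open>EE r e'\<close> by (rule JJ.JJ_mult)
    then have "JJ r (\<lambda>x. e' x * f x)" by (simp add: mult.commute)
    then show ?thesis by (rule JJ.JJ_add[OF JJ.JJ_mult[OF \<open>JJ r f'\<close> JJ_mult(2)]])
  qed
  ultimately show ?case
    by (intro exI[of _ "\<lambda>x. f' x * e x + e' x * f x"]) (auto intro: DERIV_mult)
next
  case (JJ_add f g)
  then obtain f' g' where "JJ r f'" "\<forall>x. (f has_real_derivative f' x) (at x)"
    "JJ r g'" "\<forall>x. (g has_real_derivative g' x) (at x)" by blast
  then show ?case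
    by (intro exI[of _ "\<lambda>x. f' x + g' x"]) (auto intro: JJ.intros DERIV_add)
qed

lemma JJ_Dec:
  assumes R: "\<forall>x. \<bar>r x\<bar> \<le> R"
  shows "JJ r f \<Longrightarrow> Dec f"
proof (induction rule: JJ.induct)
  case (JJ_gp p) then show ?case by (rule Dec_gp)
next
  case (JJ_mult f e)
  obtain C where "\<forall>x. \<bar>e x\<bar> \<le> C" using EE_bounded[OF R JJ_mult(2)] by blast
  then show ?case using JJ_mult(3) by (intro Dec_mult_bounded)
next
  case (JJ_add f g) then show ?case by (intro Dec_add)
qed

lemma JJ_iter:
  assumes rd: "\<And>x. (r has_real_derivative (gp p1 x * (r x * r x * r x))) (at x)"
  shows "JJ r f \<Longrightarrow> JJ r ((deriv ^^ m) f) \<and> (\<forall>x. (deriv ^^ m) f differentiable (at x))"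
proof (induction m arbitrary: f)
  case 0
  then obtain f' where "\<forall>x. (f has_real_derivative f' x) (at x)" using JJ_deriv[OF rd] by blast
  then show ?case using 0 by (auto simp: real_differentiable_def)
next
  case (Suc m)
  obtain f' where f': "JJ r f'" "\<forall>x. (f has_real_derivative f' x) (at x)"
    using JJ_deriv[OF rd Suc.prems] by blast
  then have "deriv f = f'" by (intro ext DERIV_imp_deriv) auto
  then have "(deriv ^^ Suc m) f = (deriv ^^ m) f'" unfolding funpow_Suc_right o_apply by simp
  then show ?case using Suc.IH[OF f'(1)] by simp
qed

lemma schwartzI:
  assumes rd: "\<And>x. (r has_real_derivative (gp p1 x * (r x * r x * r x))) (at x)"
    and R: "\<forall>x. \<bar>r x\<bar> \<le> R"
    and fd: "\<And>x. (f has_real_derivative f' x) (at x)"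
    and J: "JJ r f'" and D: "Dec f"
  shows "f \<in> schwartz"
proof -
  have "deriv f = f'" using fd by (intro ext DERIV_imp_deriv) auto
  then have it: "(deriv ^^ Suc m) f = (deriv ^^ m) f'" for m unfolding funpow_Suc_right o_apply by simp
  have A: "(deriv ^^ m) f differentiable (at x)" for m x
  proof (cases m)
    case 0 then show ?thesis using fd by (auto simp: real_differentiable_def)
  next
    case (Suc m') then show ?thesis unfolding Suc it using JJ_iter[OF rd J] by blast
  qed
  have B: "\<exists>C. \<forall>x. \<bar>x ^ j * (deriv ^^ m) f x\<bar> \<le> C" for j m
  proof (cases m)
    case 0 then show ?thesis using D unfolding Dec_def by simp
  next
    case (Suc m')
    have "Dec ((deriv ^^ m) f)" unfolding Suc it using JJ_Dec[OF R] JJ_iter[OF rd J] by blast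
    then show ?thesis unfolding Dec_def by blast
  qed
  show ?thesis unfolding schwartz_def using A B by blast
qed



lemma Dec_dom: "0 \<le> K \<Longrightarrow> (\<forall>x. \<bar>f x\<bar> \<le> K * \<bar>g x\<bar>) \<Longrightarrow> Dec g \<Longrightarrow> Dec f"
  unfolding Dec_def
proof (intro allI)
  fix j assume K: "0 \<le> K" and fg: "\<forall>x. \<bar>f x\<bar> \<le> K * \<bar>g x\<bar>" and "\<forall>j. \<exists>C. \<forall>x. \<bar>x ^ j * g x\<bar> \<le> C"
  then obtain C where C: "\<forall>x. \<bar>x ^ j * g x\<bar> \<le> C" by blast
  have "\<bar>x ^ j * f x\<bar> \<le> K * C" for x
  proof -
    have "\<bar>x ^ j * f x\<bar> = \<bar>x ^ j\<bar> * \<bar>f x\<bar>" by (simp add: abs_mult)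
    also have "\<dots> \<le> \<bar>x ^ j\<bar> * (K * \<bar>g x\<bar>)" using fg by (intro mult_left_mono) auto
    also have "\<dots> = K * \<bar>x ^ j * g x\<bar>" by (simp add: abs_mult)
    also have "\<dots> \<le> K * C"
      using C K by (intro mult_left_mono) auto
    finally show ?thesis .
  qed
  then show "\<exists>C. \<forall>x. \<bar>x ^ j * f x\<bar> \<le> C" by blast
qed

theorem lemma1:
  fixes n :: nat
  shows "\<exists>\<phi> \<in> schwartz. (\<exists>x. \<phi> x \<noteq> 0) \<and>
    (\<forall>k \<le> n. (\<integral>x. x ^ k * \<phi> x \<partial>lborel) =
        (\<integral>x. x ^ k * (\<phi> x)\<^sup>2 \<partial>lborel) / (\<integral>x. (\<phi> x)\<^sup>2 \<partial>lborel))"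
proof -
  define h where "h = hp (Suc n)"
  obtain B where B: "\<forall>x. \<bar>gp h x\<bar> \<le> B" using gp_bounded by blast
  define B' where "B' = max B 1"
  have B'pos: "B' > 0" unfolding B'_def by simp
  define \<epsilon> where "\<epsilon> = 1 / (8 * B')"
  have \<epsilon>pos: "\<epsilon> > 0" unfolding \<epsilon>_def using B'pos by simp
  define q0 where "q0 = smult \<epsilon> h"
  define G where "G = gp q0"
  have G_eq: "G x = \<epsilon> * gp h x" for x by (simp add: G_def q0_def gp_def)
  have Gb: "\<bar>G x\<bar> \<le> 1/8" for x
  proof -
    have "\<bar>G x\<bar> = \<epsilon> * \<bar>gp h x\<bar>" using \<epsilon>pos by (simp add: G_eq abs_mult)
    also have "\<dots> \<le> \<epsilon> * B'" using B unfolding B'_def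
      by (intro mult_left_mono) (auto simp: \<epsilon>pos less_imp_le intro: le_max_iff_disj[THEN iffD2])
    also have "\<dots> = 1/8" unfolding \<epsilon>_def using B'pos by simp
    finally show ?thesis .
  qed
  have Gd: "(G has_real_derivative gp (Dp q0) x) (at x)" for x
    unfolding G_def by (rule gp_deriv)
  define s where "s = (\<lambda>x. sqrt (1 - 4 * G x))"
  have pos: "1 - 4 * G x \<ge> 1/2" for x using Gb[of x] by linarith
  have s_ge: "s x \<ge> 1/2" for x
    unfolding s_def by (rule real_le_rsqrt) (use pos[of x] in \<open>simp add: power2_eq_square\<close>)
  have s_sq: "(s x)^2 = 1 - 4 * G x" for x
    unfolding s_def using pos[of x] by simp
  define r where "r = (\<lambda>x. inverse (s x))"
  have R: "\<forall>x. \<bar>r x\<bar> \<le> 2"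
  proof
    fix x
    have "s x > 0" using s_ge[of x] by linarith
    then show "\<bar>r x\<bar> \<le> 2" unfolding r_def using s_ge[of x]
      by (simp add: field_simps)
  qed
  have sd: "(s has_real_derivative (- 2 * gp (Dp q0) x * r x)) (at x)" for x
  proof -
    have g: "((\<lambda>x. 1 - 4 * G x) has_real_derivative (0 - 4 * gp (Dp q0) x)) (at x)"
      by (rule DERIV_diff[OF DERIV_const DERIV_cmult[OF Gd]])
    have "1 - 4 * G x > 0" using pos[of x] by linarith
    from DERIV_chain2[OF DERIV_real_sqrt[OF this] g]
    have "((\<lambda>x. sqrt (1 - 4 * G x)) has_real_derivative
        inverse (sqrt (1 - 4 * G x)) / 2 * (0 - 4 * gp (Dp q0) x)) (at x)" .
    then show ?thesis unfolding s_def r_def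
      by (rule DERIV_cong) (simp add: field_simps)
  qed
  have rd: "(r has_real_derivative gp (smult 2 (Dp q0)) x * (r x * r x * r x)) (at x)" for x
  proof -
    have "s x \<noteq> 0" using s_ge[of x] by linarith
    from DERIV_inverse_fun[OF sd this]
    have "((\<lambda>x. inverse (s x)) has_real_derivative
       - (- 2 * gp (Dp q0) x * r x * inverse (s x ^ Suc (Suc 0)))) (at x)" .
    then show ?thesis unfolding r_def
      by (rule DERIV_cong) (simp add: gp_def field_simps)
  qed
  define \<psi> where "\<psi> = (\<lambda>x. (1 - s x) / 2)"
  have \<psi>d: "(\<psi> has_real_derivative gp (Dp q0) x * r x) (at x)" for x
    unfolding \<psi>_def
    by (rule DERIV_cong[OF DERIV_cdivide[OF DERIV_diff[OF DERIV_const sd]]]) simp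
  have \<psi>G: "\<psi> x - (\<psi> x)^2 = G x" for x
  proof -
    have "\<psi> x - (\<psi> x)^2 = (1 - (s x)^2) / 4"
      unfolding \<psi>_def by (simp add: power2_eq_square field_simps)
    then show ?thesis using s_sq[of x] by simp
  qed
  have \<psi>b: "\<bar>\<psi> x\<bar> \<le> 2 * \<bar>G x\<bar>" for x
  proof -
    have "(1 - s x) * (1 + s x) = 4 * G x"
      using s_sq[of x] by (simp add: power2_eq_square algebra_simps)
    then have e: "\<bar>1 - s x\<bar> * (1 + s x) = 4 * \<bar>G x\<bar>"
      using s_ge[of x] by (metis abs_mult abs_of_nonneg abs_of_pos add_pos_nonneg zero_less_one abs_numeral
          mult_nonneg_nonneg order_trans zero_le_numeral \<open>1/2 \<le> s x\<close> half_gt_zero_iff less_imp_le)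
    have "\<bar>1 - s x\<bar> \<le> \<bar>1 - s x\<bar> * (1 + s x)"
      using s_ge[of x] by (simp add: mult_le_cancel_left1)
    then have "\<bar>1 - s x\<bar> \<le> 4 * \<bar>G x\<bar>" using e by simp
    then show ?thesis unfolding \<psi>_def by simp
  qed
  have \<psi>small: "\<bar>\<psi> x\<bar> \<le> 1" for x using \<psi>b[of x] Gb[of x] by linarith
  have D\<psi>: "Dec \<psi>"
    by (rule Dec_dom[of 2 _ G]) (use \<psi>b G_def Dec_gp in auto)
  have D\<psi>2: "Dec (\<lambda>x. (\<psi> x)^2)"
  proof -
    have "Dec (\<lambda>x. \<psi> x * \<psi> x)" using \<psi>small by (intro Dec_mult_bounded[OF D\<psi>]) auto
    then show ?thesis by (simp add: power2_eq_square)
  qed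
  have c\<psi>: "continuous_on UNIV \<psi>"
    using \<psi>d by (intro continuous_at_imp_continuous_on ballI DERIV_isCont) auto
  have I1: "integrable lborel (\<lambda>x. x ^ k * \<psi> x)" for k
    by (rule Dec_integrable[OF Dec_pow[OF D\<psi>]]) (intro continuous_intros c\<psi>)
  have I2: "integrable lborel (\<lambda>x. x ^ k * (\<psi> x)^2)" for k
    by (rule Dec_integrable[OF Dec_pow[OF D\<psi>2]]) (intro continuous_intros c\<psi>)
  define M where "M k = (\<integral>x. x ^ k * \<psi> x \<partial>lborel)" for k
  define N where "N k = (\<integral>x. x ^ k * (\<psi> x)^2 \<partial>lborel)" for k
  have MN: "M k = N k" if "k \<le> n" for k
  proof -
    have "M k - N k = (\<integral>x. x ^ k * \<psi> x - x ^ k * (\<psi> x)^2 \<partial>lborel)"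
      unfolding M_def N_def using I1 I2 by simp
    also have "\<dots> = (\<integral>x. \<epsilon> * (x ^ k * gp h x) \<partial>lborel)"
    proof (rule Bochner_Integration.integral_cong)
      fix x
      have "x ^ k * \<psi> x - x ^ k * (\<psi> x)^2 = x ^ k * (\<psi> x - (\<psi> x)^2)" by (simp add: algebra_simps)
      then show "x ^ k * \<psi> x - x ^ k * (\<psi> x)^2 = \<epsilon> * (x ^ k * gp h x)"
        unfolding \<psi>G G_eq by simp
    qed simp
    also have "\<dots> = 0" unfolding h_def using hp_ortho[of k "Suc n"] that by simp
    finally show ?thesis by simp
  qed
  obtain x0 where x0: "poly h x0 \<noteq> 0"
    using hp_nonzero[of "Suc n"] poly_all_0_iff_0[of h] unfolding h_def by blast
  have Gx0: "G x0 \<noteq> 0" using x0 \<epsilon>pos by (simp add: G_eq gp_def)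
  have \<psi>x0: "\<psi> x0 \<noteq> 0" using \<psi>G[of x0] Gx0 by auto
  have N0: "N 0 > 0"
  proof -
    have I20: "integrable lborel (\<lambda>x. (\<psi> x)^2)" using I2[of 0] by simp
    have "N 0 \<ge> 0" unfolding N_def by simp
    moreover have "N 0 \<noteq> 0"
    proof
      assume "N 0 = 0"
      then have "(\<integral>x. (\<psi> x)^2 \<partial>lborel) = 0" unfolding N_def by simp
      then have "AE x in lborel. (\<psi> x)^2 = 0"
        using integral_nonneg_eq_0_iff_AE[OF I20] by simp
      then have "AE x in lebesgue. (\<psi> x)^2 = 0" by (rule AE_completion)
      then have ae: "AE x \<in> UNIV in lebesgue. x \<in> {x. (\<psi> x)^2 = 0}" by simp
      have cl: "closed {x. (\<psi> x)^2 = 0}"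
        by (rule closed_Collect_eq) (intro continuous_intros c\<psi>)+
      have "x0 \<in> {x. (\<psi> x)^2 = 0}"
        by (rule mem_closed_if_AE_lebesgue_open[OF open_UNIV cl ae]) simp
      then show False using \<psi>x0 by simp
    qed
    ultimately show ?thesis by linarith
  qed
  define c where "c = 1 / N 0"
  have cpos: "c > 0" unfolding c_def using N0 by simp
  define \<phi> where "\<phi> = (\<lambda>x. c * \<psi> x)"
  have \<phi>d: "(\<phi> has_real_derivative gp (Dp q0) x * (r x * c)) (at x)" for x
    unfolding \<phi>_def by (rule DERIV_cong[OF DERIV_cmult[OF \<psi>d]]) simp
  have J: "JJ r (\<lambda>x. gp (Dp q0) x * (r x * c))"
    by (rule JJ.JJ_mult[OF JJ.JJ_gp EE.EE_mult[OF EE.EE_r EE.EE_const]])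
  have "\<phi> \<in> schwartz"
    by (rule schwartzI[OF rd R \<phi>d J]) (unfold \<phi>_def, rule Dec_cmult[OF D\<psi>])
  moreover have "\<phi> x0 \<noteq> 0" unfolding \<phi>_def using cpos \<psi>x0 by simp
  moreover have "(\<integral>x. x ^ k * \<phi> x \<partial>lborel) =
        (\<integral>x. x ^ k * (\<phi> x)\<^sup>2 \<partial>lborel) / (\<integral>x. (\<phi> x)\<^sup>2 \<partial>lborel)" if "k \<le> n" for k
  proof -
    have e1: "(\<integral>x. x ^ k * \<phi> x \<partial>lborel) = c * M k"
      unfolding \<phi>_def M_def by (simp add: algebra_simps)
    have ee: "x ^ k * (\<phi> x)\<^sup>2 = c^2 * (x ^ k * (\<psi> x)\<^sup>2)" for x
      unfolding \<phi>_def power_mult_distrib by (rule mult.left_commute)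
    have e2: "(\<integral>x. x ^ k * (\<phi> x)\<^sup>2 \<partial>lborel) = c^2 * N k"
      unfolding N_def by (simp only: ee integral_mult_right_zero)
    have e3: "(\<integral>x. (\<phi> x)\<^sup>2 \<partial>lborel) = c^2 * N 0"
      unfolding \<phi>_def N_def by (simp add: algebra_simps power_mult_distrib)
    have "c^2 * N k / (c^2 * N 0) = N k / N 0" using cpos by simp
    also have "\<dots> = c * M k" using MN[OF that] unfolding c_def by simp
    finally show ?thesis unfolding e1 e2 e3 by simp
  qed
  ultimately show ?thesis by blast
qed


end
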